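(* Let $G$ be a simple stochastic game and $A$ a subset of the arcs of $G$. A positional MAX strategy $\sigma$ is optimal in $G$ if and only if it is optimal in $G[A,\sigma]$.
   Context: A simple stochastic game (SSG) $G$ is a finite directed graph whose vertex set is partitioned into MAX vertices, MIN vertices, random vertices and a nonempty set of sinks; every non-sink vertex has at least one outgoing arc, every sink has exactly one outgoing arc, a self-loop; each random vertex $x$ carries a rational probability distribution $p_x$ on its out-neighbourhood, positive on every out-neighbour; each sink $s$ has rational value $\mathrm{Val}(s)\in[0,1]$. A positional MAX (resp. MIN) strategy assigns to each MAX (resp. MIN) vertex one of its out-neighbours. Under $\sigma,\tau$ from start $x_0$, the random play moves from MAX vertex $x$ to $\sigma(x)$, from MIN vertex $x$ to $\tau(x)$, from random vertex $x$ to an out-neighbour drawn by $p_x$ independently, and stays at a sink once reached; its value is $\mathrm{Val}(s)$ if it reaches sink $s$, else $0$, and $v^G_{\sigma,\tau}(x_0)$ is its expectation. A best response to $\sigma$ is a positional MIN strategy $\tau$ with $v_{\sigma,\tau}\le v_{\sigma,\tau'}$ pointwise for all MIN strategies $\tau'$ (one exists), and $v^G_\sigma:=v^G_{\sigma,\tau}$ for such $\tau$. A positional MAX strategy $\sigma$ is optimal in $G$ if $v^G_\sigma\ge v^G_{\sigma''}$ pointwise for every positional MAX strategy $\sigma''$. Transformed game: for a set $A$ of arcs of $G$, $G[A,\sigma]$ is obtained from a copy of $G$ by replacing each arc $e=(x,y)\in A$ by an arc $(x,s_e)$ to a new sink $s_e$ of value $v^G_\sigma(y)$ (for random $x$, $p_x(s_e)=p_x(y)$);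 $y$ is kept. Strategies of $G$ and $G[A,\sigma]$ are identified (a MAX vertex $x$ with $\sigma(x)=y$, $(x,y)\in A$, moves to $s_{(x,y)}$). *)

theory Defs
  imports Complex_Main
begin

record 'v ssg =
  Vmax  :: "'v set"
  Vmin  :: "'v set"
  Vrand :: "'v set"
  Vsink :: "'v set"
  arcs  :: "('v \<times> 'v) set"
  prob  :: "'v \<Rightarrow> 'v \<Rightarrow> real"
  sval  :: "'v \<Rightarrow> real"

definition verts :: "('v, 'a) ssg_scheme \<Rightarrow> 'v set" where
  "verts G = Vmax G \<union> Vmin G \<union> Vrand G \<union> Vsink G"

definition outn :: "('v, 'a) ssg_scheme \<Rightarrow> 'v \<Rightarrow> 'v set" where
  "outn G x = {y. (x, y) \<in> arcs G}"

definition is_ssg :: "('v, 'a) ssg_scheme \<Rightarrow> bool" where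
  "is_ssg G \<longleftrightarrow>
     finite (verts G) \<and>
     Vmax G \<inter> Vmin G = {} \<and> Vmax G \<inter> Vrand G = {} \<and> Vmax G \<inter> Vsink G = {} \<and>
     Vmin G \<inter> Vrand G = {} \<and> Vmin G \<inter> Vsink G = {} \<and> Vrand G \<inter> Vsink G = {} \<and>
     Vsink G \<noteq> {} \<and>
     arcs G \<subseteq> verts G \<times> verts G \<and>
     (\<forall>x \<in> verts G - Vsink G. outn G x \<noteq> {}) \<and>
     (\<forall>s \<in> Vsink G. outn G s = {s}) \<and>
     (\<forall>x \<in> Vrand G. (\<forall>y \<in> outn G x. prob G x y > 0 \<and> prob G x y \<in> \<rat>) \<and>
                    (\<Sum>y \<in> outn G x. prob G x y) = 1) \<and>
     (\<forall>s \<in> Vsink G. sval G s \<in> \<rat> \<and> 0 \<le> sval G s \<and> sval G s \<le> 1)"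

text \<open>Positional strategies (only their values on MAX resp. MIN vertices matter).\<close>
definition max_strategy :: "('v, 'a) ssg_scheme \<Rightarrow> ('v \<Rightarrow> 'v) \<Rightarrow> bool" where
  "max_strategy G \<sigma> \<longleftrightarrow> (\<forall>x \<in> Vmax G. (x, \<sigma> x) \<in> arcs G)"

definition min_strategy :: "('v, 'a) ssg_scheme \<Rightarrow> ('v \<Rightarrow> 'v) \<Rightarrow> bool" where
  "min_strategy G \<tau> \<longleftrightarrow> (\<forall>x \<in> Vmin G. (x, \<tau> x) \<in> arcs G)"

text \<open>\<open>play_iter G \<sigma> \<tau> n x\<close> is the expected payoff of the random play from \<open>x\<close>
  stopped after \<open>n\<close> steps, i.e. the sum over sinks \<open>s\<close> of \<open>Val(s)\<close> times the
  probability that the play is in \<open>s\<close> at time \<open>n\<close> (sinks are absorbing).\<close>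
fun play_iter :: "('v, 'a) ssg_scheme \<Rightarrow> ('v \<Rightarrow> 'v) \<Rightarrow> ('v \<Rightarrow> 'v) \<Rightarrow> nat \<Rightarrow> 'v \<Rightarrow> real" where
  "play_iter G \<sigma> \<tau> 0 x = (if x \<in> Vsink G then sval G x else 0)"
| "play_iter G \<sigma> \<tau> (Suc n) x =
     (if x \<in> Vsink G then sval G x
      else if x \<in> Vmax G then play_iter G \<sigma> \<tau> n (\<sigma> x)
      else if x \<in> Vmin G then play_iter G \<sigma> \<tau> n (\<tau> x)
      else (\<Sum>y \<in> outn G x. prob G x y * play_iter G \<sigma> \<tau> n y))"

text \<open>The value \<open>v_{\<sigma>,\<tau>}(x)\<close>: expectation of \<open>Val(s)\<close> if the play reaches sink \<open>s\<close>,
  \<open>0\<close> otherwise; equals the limit (supremum) of the \<open>n\<close>-step values.\<close>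
definition play_value :: "('v, 'a) ssg_scheme \<Rightarrow> ('v \<Rightarrow> 'v) \<Rightarrow> ('v \<Rightarrow> 'v) \<Rightarrow> 'v \<Rightarrow> real" where
  "play_value G \<sigma> \<tau> x = (SUP n. play_iter G \<sigma> \<tau> n x)"

definition best_response :: "('v, 'a) ssg_scheme \<Rightarrow> ('v \<Rightarrow> 'v) \<Rightarrow> ('v \<Rightarrow> 'v) \<Rightarrow> bool" where
  "best_response G \<sigma> \<tau> \<longleftrightarrow> min_strategy G \<tau> \<and>
     (\<forall>\<tau>'. min_strategy G \<tau>' \<longrightarrow> (\<forall>x \<in> verts G. play_value G \<sigma> \<tau> x \<le> play_value G \<sigma> \<tau>' x))"

definition val_sigma :: "('v, 'a) ssg_scheme \<Rightarrow> ('v \<Rightarrow> 'v) \<Rightarrow> 'v \<Rightarrow> real" where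
  "val_sigma G \<sigma> x = play_value G \<sigma> (SOME \<tau>. best_response G \<sigma> \<tau>) x"

definition optimal :: "('v, 'a) ssg_scheme \<Rightarrow> ('v \<Rightarrow> 'v) \<Rightarrow> bool" where
  "optimal G \<sigma> \<longleftrightarrow> max_strategy G \<sigma> \<and>
     (\<forall>\<sigma>''. max_strategy G \<sigma>'' \<longrightarrow> (\<forall>x \<in> verts G. val_sigma G \<sigma>'' x \<le> val_sigma G \<sigma> x))"

text \<open>Vertices of \<open>G[A,\<sigma>]\<close>: \<open>Inl x\<close> is the copy of vertex \<open>x\<close>, \<open>Inr e\<close> is the new
  sink \<open>s_e\<close>. Self-loops of sinks in \<open>A\<close> are ignored (sinks stay sinks).\<close>
definition eff_arcs :: "('v, 'a) ssg_scheme \<Rightarrow> ('v \<times> 'v) set \<Rightarrow> ('v \<times> 'v) set" where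
  "eff_arcs G A = {e \<in> A. fst e \<notin> Vsink G}"

definition transform :: "('v, 'a) ssg_scheme \<Rightarrow> ('v \<times> 'v) set \<Rightarrow> ('v \<Rightarrow> 'v)
                         \<Rightarrow> ('v + ('v \<times> 'v)) ssg" where
  "transform G A \<sigma> =
    (let A' = eff_arcs G A in
     \<lparr> Vmax = Inl ` Vmax G, Vmin = Inl ` Vmin G, Vrand = Inl ` Vrand G,
       Vsink = Inl ` Vsink G \<union> Inr ` A',
       arcs = {(Inl x, Inl y) | x y. (x, y) \<in> arcs G - A'}
              \<union> {(Inl x, Inr (x, y)) | x y. (x, y) \<in> A'}
              \<union> {(Inr e, Inr e) | e. e \<in> A'},
       prob = (\<lambda>u w. case (u, w) of
                 (Inl x, Inl y) \<Rightarrow> prob G x y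
               | (Inl x, Inr (x', y)) \<Rightarrow> (if x' = x then prob G x y else 0)
               | _ \<Rightarrow> 0),
       sval = (\<lambda>u. case u of Inl s \<Rightarrow> sval G s | Inr (x, y) \<Rightarrow> val_sigma G \<sigma> y) \<rparr>)"

definition lift_strategy :: "('v, 'a) ssg_scheme \<Rightarrow> ('v \<times> 'v) set \<Rightarrow> ('v \<Rightarrow> 'v)
                             \<Rightarrow> ('v + ('v \<times> 'v)) \<Rightarrow> ('v + ('v \<times> 'v))" where
  "lift_strategy G A \<sigma> u = (case u of
      Inl x \<Rightarrow> (if (x, \<sigma> x) \<in> eff_arcs G A then Inr (x, \<sigma> x) else Inl (\<sigma> x))
    | Inr e \<Rightarrow> Inr e)"

end

theory Submission
  imports Defs "HOL-Library.FuncSet"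
begin


definition wfg :: "('v, 'a) ssg_scheme \<Rightarrow> bool" where
  "wfg G \<longleftrightarrow>
     finite (verts G) \<and>
     Vmax G \<inter> Vmin G = {} \<and> Vmax G \<inter> Vrand G = {} \<and> Vmax G \<inter> Vsink G = {} \<and>
     Vmin G \<inter> Vrand G = {} \<and> Vmin G \<inter> Vsink G = {} \<and> Vrand G \<inter> Vsink G = {} \<and>
     Vsink G \<noteq> {} \<and>
     arcs G \<subseteq> verts G \<times> verts G \<and>
     (\<forall>x \<in> verts G - Vsink G. outn G x \<noteq> {}) \<and>
     (\<forall>s \<in> Vsink G. outn G s = {s}) \<and>
     (\<forall>x \<in> Vrand G. (\<forall>y \<in> outn G x. prob G x y > 0) \<and>
                    (\<Sum>y \<in> outn G x. prob G x y) = 1) \<and>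
     (\<forall>s \<in> Vsink G. 0 \<le> sval G s \<and> sval G s \<le> 1)"

lemma is_ssg_wfg: "is_ssg G \<Longrightarrow> wfg G"
  unfolding is_ssg_def wfg_def by (elim conjE) (intro conjI; (assumption | fast))

definition Pop :: "('v, 'a) ssg_scheme \<Rightarrow> ('v \<Rightarrow> 'v) \<Rightarrow> ('v \<Rightarrow> 'v) \<Rightarrow> ('v \<Rightarrow> real) \<Rightarrow> 'v \<Rightarrow> real" where
  "Pop H \<sigma> \<tau> f x = (if x \<in> Vmax H then f (\<sigma> x) else if x \<in> Vmin H then f (\<tau> x)
      else (\<Sum>y \<in> outn H x. prob H x y * f y))"

definition Lop :: "('v, 'a) ssg_scheme \<Rightarrow> ('v \<Rightarrow> 'v) \<Rightarrow> ('v \<Rightarrow> 'v) \<Rightarrow> ('v \<Rightarrow> real) \<Rightarrow> 'v \<Rightarrow> real" where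
  "Lop H \<sigma> \<tau> f x = (if x \<in> Vsink H then sval H x else Pop H \<sigma> \<tau> f x)"

lemma pi_Suc: "play_iter H \<sigma> \<tau> (Suc n) x = Lop H \<sigma> \<tau> (play_iter H \<sigma> \<tau> n) x"
  by (simp add: Lop_def Pop_def)

lemma wfg_fin: "wfg H \<Longrightarrow> finite (verts H)" by (simp add: wfg_def)

lemma outn_sub: "wfg H \<Longrightarrow> outn H x \<subseteq> verts H"
  unfolding wfg_def outn_def by blast

lemma outn_empty: "wfg H \<Longrightarrow> x \<notin> verts H \<Longrightarrow> outn H x = {}"
  unfolding wfg_def outn_def by blast

lemma outn_fin: "wfg H \<Longrightarrow> finite (outn H x)"
  using outn_sub wfg_fin finite_subset by metis

lemma rand_cases: "wfg H \<Longrightarrow> x \<notin> Vsink H \<Longrightarrow> x \<notin> Vmax H \<Longrightarrow> x \<notin> Vmin H \<Longrightarrow>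
   (x \<in> Vrand H \<and> x \<in> verts H) \<or> (x \<notin> verts H \<and> outn H x = {})"
  using outn_empty[of H x] unfolding verts_def by blast

lemma prob_pos: "wfg H \<Longrightarrow> x \<in> Vrand H \<Longrightarrow> y \<in> outn H x \<Longrightarrow> 0 < prob H x y"
  unfolding wfg_def by blast

lemma prob_sum1: "wfg H \<Longrightarrow> x \<in> Vrand H \<Longrightarrow> (\<Sum>y \<in> outn H x. prob H x y) = 1"
  unfolding wfg_def by blast

lemma prob_nonneg: "wfg H \<Longrightarrow> x \<notin> Vsink H \<Longrightarrow> x \<notin> Vmax H \<Longrightarrow> x \<notin> Vmin H \<Longrightarrow>
   y \<in> outn H x \<Longrightarrow> 0 \<le> prob H x y"
  using rand_cases[of H x] prob_pos[of H x y] by fastforce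

lemma Pop_mono: assumes "wfg H" "x \<notin> Vsink H" "\<And>y. f y \<le> g y"
  shows "Pop H \<sigma> \<tau> f x \<le> Pop H \<sigma> \<tau> g x"
proof -
  have "(\<Sum>y \<in> outn H x. prob H x y * f y) \<le> (\<Sum>y \<in> outn H x. prob H x y * g y)"
    if "x \<notin> Vmax H" "x \<notin> Vmin H"
    using that assms prob_nonneg[of H x] by (intro sum_mono mult_left_mono) auto
  then show ?thesis using assms by (simp add: Pop_def)
qed

lemma Lop_mono: assumes "wfg H" "\<And>y. f y \<le> g y"
  shows "Lop H \<sigma> \<tau> f x \<le> Lop H \<sigma> \<tau> g x"
  using Pop_mono[OF assms(1) _ assms(2)] by (simp add: Lop_def)

lemma Pop_ge0: assumes "wfg H" "x \<notin> Vsink H" "\<And>y. 0 \<le> f y"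
  shows "0 \<le> Pop H \<sigma> \<tau> f x"
  using assms prob_nonneg[of H x] unfolding Pop_def by (auto intro!: sum_nonneg)

lemma Pop_le: assumes "wfg H" "x \<notin> Vsink H" "\<And>y. f y \<le> c" "0 \<le> c"
  shows "Pop H \<sigma> \<tau> f x \<le> c"
proof (cases "x \<in> Vmax H \<or> x \<in> Vmin H")
  case True then show ?thesis using assms by (auto simp: Pop_def)
next
  case False
  from rand_cases[OF assms(1,2)] False
  consider "x \<in> Vrand H" | "outn H x = {}" by blast
  then show ?thesis
  proof cases
    case 1
    have "(\<Sum>y \<in> outn H x. prob H x y * f y) \<le> (\<Sum>y \<in> outn H x. prob H x y * c)"
      using assms False prob_nonneg[of H x] by (intro sum_mono mult_left_mono) auto
    also have "\<dots> = c" using prob_sum1[OF assms(1) 1] by (simp add: sum_distrib_right[symmetric])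
    finally show ?thesis using False by (simp add: Pop_def)
  next
    case 2 then show ?thesis using False assms by (simp add: Pop_def)
  qed
qed

lemma Pop_diff: "Pop H \<sigma> \<tau> (\<lambda>z. f z - g z) x = Pop H \<sigma> \<tau> f x - Pop H \<sigma> \<tau> g x"
  by (simp add: Pop_def right_diff_distrib sum_subtractf)

lemma sval_bounds: "wfg H \<Longrightarrow> x \<in> Vsink H \<Longrightarrow> 0 \<le> sval H x \<and> sval H x \<le> 1"
  unfolding wfg_def by blast

lemma pi_bounds: assumes "wfg H" shows "0 \<le> play_iter H \<sigma> \<tau> n x \<and> play_iter H \<sigma> \<tau> n x \<le> 1"
proof (induction n arbitrary: x)
  case 0 then show ?case using sval_bounds[OF assms] by simp
next
  case (Suc n)
  show ?case
  proof (cases "x \<in> Vsink H")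
    case True then show ?thesis using sval_bounds[OF assms] by (simp add: pi_Suc Lop_def)
  next
    case False
    then show ?thesis unfolding pi_Suc Lop_def
      using Pop_ge0[OF assms False, of "play_iter H \<sigma> \<tau> n"] Pop_le[OF assms False, of "play_iter H \<sigma> \<tau> n" 1] Suc
      by auto
  qed
qed

lemma pi_mono: assumes "wfg H" shows "play_iter H \<sigma> \<tau> n x \<le> play_iter H \<sigma> \<tau> (Suc n) x"
proof (induction n arbitrary: x)
  case 0
  show ?case
  proof (cases "x \<in> Vsink H")
    case True then show ?thesis by simp
  next
    case False
    then show ?thesis using Pop_ge0[OF assms False, of "play_iter H \<sigma> \<tau> 0"] pi_bounds[OF assms]
      by (simp only: pi_Suc Lop_def) simp
  qed
next
  case (Suc n)
  then show ?case unfolding pi_Suc[of H \<sigma> \<tau> "Suc n"] pi_Suc[of H \<sigma> \<tau> n]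
    by (intro Lop_mono assms) (simp add: pi_Suc)
qed

lemma pv_lim: assumes "wfg H"
  shows "(\<lambda>n. play_iter H \<sigma> \<tau> n x) \<longlonglongrightarrow> play_value H \<sigma> \<tau> x"
  unfolding play_value_def
  by (rule LIMSEQ_incseq_SUP) (use pi_bounds[OF assms] pi_mono[OF assms] in
     \<open>auto intro: incseq_SucI bdd_aboveI2[where M=1]\<close>)

lemma pv_bounds: assumes "wfg H" shows "0 \<le> play_value H \<sigma> \<tau> x \<and> play_value H \<sigma> \<tau> x \<le> 1"
  using pv_lim[OF assms, of \<sigma> \<tau> x] pi_bounds[OF assms]
  by (meson LIMSEQ_le_const LIMSEQ_le_const2)

lemma Lop_tendsto: assumes "\<And>y. (\<lambda>n. F n y) \<longlonglongrightarrow> f y"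
  shows "(\<lambda>n. Lop H \<sigma> \<tau> (F n) x) \<longlonglongrightarrow> Lop H \<sigma> \<tau> f x"
  unfolding Lop_def Pop_def using assms by (auto intro!: tendsto_intros)

lemma pv_fix: assumes "wfg H"
  shows "play_value H \<sigma> \<tau> x = Lop H \<sigma> \<tau> (play_value H \<sigma> \<tau>) x"
proof -
  have "(\<lambda>n. play_iter H \<sigma> \<tau> (Suc n) x) \<longlonglongrightarrow> play_value H \<sigma> \<tau> x"
    using pv_lim[OF assms] LIMSEQ_Suc by blast
  moreover have "(\<lambda>n. play_iter H \<sigma> \<tau> (Suc n) x) \<longlonglongrightarrow> Lop H \<sigma> \<tau> (play_value H \<sigma> \<tau>) x"
    unfolding pi_Suc by (rule Lop_tendsto) (rule pv_lim[OF assms])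
  ultimately show ?thesis using LIMSEQ_unique by blast
qed

lemma pv_le: assumes "wfg H" "\<And>x. 0 \<le> u x" "\<And>x. Lop H \<sigma> \<tau> u x \<le> u x"
  shows "play_value H \<sigma> \<tau> x \<le> u x"
proof -
  have "play_iter H \<sigma> \<tau> n x \<le> u x" for n
  proof (induction n arbitrary: x)
    case 0 then show ?case using assms(2)[of x] assms(3)[of x] by (auto simp: Lop_def split: if_splits)
  next
    case (Suc n)
    then show ?case unfolding pi_Suc using Lop_mono[OF assms(1), of "play_iter H \<sigma> \<tau> n" u] assms(3)
      by (meson order_trans)
  qed
  then show ?thesis unfolding play_value_def by (intro cSUP_least) auto
qed


definition closedS :: "('v, 'a) ssg_scheme \<Rightarrow> ('v \<Rightarrow> 'v) \<Rightarrow> ('v \<Rightarrow> 'v) \<Rightarrow> 'v set \<Rightarrow> bool" where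
  "closedS H \<sigma> \<tau> C \<longleftrightarrow> C \<subseteq> verts H \<and>
     (\<forall>z\<in>C. z \<notin> Vsink H \<longrightarrow> (z \<in> Vmax H \<longrightarrow> \<sigma> z \<in> C) \<and> (z \<in> Vmin H \<longrightarrow> \<tau> z \<in> C) \<and>
        (z \<notin> Vmax H \<and> z \<notin> Vmin H \<longrightarrow> outn H z \<subseteq> C))"

lemma closed_zero: assumes "wfg H" "closedS H \<sigma> \<tau> C" "C \<inter> Vsink H = {}" "x \<in> C"
  shows "play_value H \<sigma> \<tau> x = 0"
proof -
  have "play_iter H \<sigma> \<tau> n x = 0" if "x \<in> C" for n x using that
  proof (induction n arbitrary: x)
    case 0 then show ?case using assms(3) by auto
  next
    case (Suc n)
    have ns: "x \<notin> Vsink H" using Suc.prems assms(3) by auto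
    have cl: "(x \<in> Vmax H \<longrightarrow> \<sigma> x \<in> C) \<and> (x \<in> Vmin H \<longrightarrow> \<tau> x \<in> C) \<and>
        (x \<notin> Vmax H \<and> x \<notin> Vmin H \<longrightarrow> outn H x \<subseteq> C)"
      using Suc.prems ns assms(2) unfolding closedS_def by blast
    have "(\<Sum>y\<in>outn H x. prob H x y * play_iter H \<sigma> \<tau> n y) = 0" if "x \<notin> Vmax H" "x \<notin> Vmin H"
      using cl that Suc.IH by (intro sum.neutral) auto
    then show ?case using cl Suc.IH ns by (simp add: pi_Suc Lop_def Pop_def)
  qed
  then show ?thesis using assms(4) unfolding play_value_def by simp
qed

lemma verts_closed: assumes "wfg H" "max_strategy H \<sigma>" "min_strategy H \<tau>"
  shows "closedS H \<sigma> \<tau> (verts H)"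
proof -
  have A: "arcs H \<subseteq> verts H \<times> verts H" using assms(1) unfolding wfg_def by blast
  show ?thesis unfolding closedS_def
  proof (intro conjI ballI impI)
    fix z assume z: "z \<in> verts H" "z \<notin> Vsink H"
    show "\<sigma> z \<in> verts H" if "z \<in> Vmax H" using that assms(2) A unfolding max_strategy_def by blast
    show "\<tau> z \<in> verts H" if "z \<in> Vmin H" using that assms(3) A unfolding min_strategy_def by blast
    show "outn H z \<subseteq> verts H" using outn_sub[OF assms(1)] by blast
  qed simp
qed

lemma MaxP: assumes "wfg H" "closedS H \<sigma> \<tau> C" "C \<noteq> {}"
    "\<And>z. z \<in> C \<Longrightarrow> z \<notin> Vsink H \<Longrightarrow> d z \<le> Pop H \<sigma> \<tau> d z"
  defines "D \<equiv> {z\<in>C. d z = Max (d ` C)}"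
  shows "D \<noteq> {} \<and> closedS H \<sigma> \<tau> D"
proof -
  have finC: "finite C" using assms(2) wfg_fin[OF assms(1)] finite_subset unfolding closedS_def by blast
  let ?m = "Max (d ` C)"
  have le: "d z \<le> ?m" if "z \<in> C" for z using finC that by simp
  have "?m \<in> d ` C" using finC assms(3) by simp
  then have ne: "D \<noteq> {}" unfolding D_def by auto
  have cl: "closedS H \<sigma> \<tau> D"
    unfolding closedS_def
  proof (intro conjI ballI impI)
    show "D \<subseteq> verts H" using assms(2) unfolding D_def closedS_def by auto
  next
    fix z assume z: "z \<in> D" "z \<notin> Vsink H"
    have zC: "z \<in> C" and dz: "d z = ?m" using z unfolding D_def by auto
    have sub: "d z \<le> Pop H \<sigma> \<tau> d z" using assms(4) zC z by auto
    {
      assume "z \<in> Vmax H"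
      then have "\<sigma> z \<in> C" using assms(2) zC z unfolding closedS_def by auto
      then show "\<sigma> z \<in> D" using sub le[of "\<sigma> z"] dz \<open>z \<in> Vmax H\<close> unfolding D_def Pop_def by auto
    }
    {
      assume "z \<in> Vmin H"
      then have "z \<notin> Vmax H" using assms(1) unfolding wfg_def by auto
      have "\<tau> z \<in> C" using assms(2) zC z \<open>z \<in> Vmin H\<close> unfolding closedS_def by auto
      then show "\<tau> z \<in> D" using sub le[of "\<tau> z"] dz \<open>z \<in> Vmin H\<close> \<open>z \<notin> Vmax H\<close>
        unfolding D_def Pop_def by auto
    }
    {
      assume nm: "z \<notin> Vmax H \<and> z \<notin> Vmin H"
      have oC: "outn H z \<subseteq> C" using assms(2) zC z nm unfolding closedS_def by auto
      have zr: "z \<in> Vrand H" using rand_cases[OF assms(1) z(2)] nm zC assms(2) unfolding closedS_def by auto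
      show "outn H z \<subseteq> D"
      proof
        fix y assume y: "y \<in> outn H z"
        show "y \<in> D"
        proof (rule ccontr)
          assume "y \<notin> D"
          then have dy: "d y < ?m" using y oC le[of y] unfolding D_def by force
          have "(\<Sum>w\<in>outn H z. prob H z w * d w) < (\<Sum>w\<in>outn H z. prob H z w * ?m)"
          proof (rule sum_strict_mono_ex1)
            show "finite (outn H z)" by (rule outn_fin[OF assms(1)])
            show "\<forall>w\<in>outn H z. prob H z w * d w \<le> prob H z w * ?m"
            proof
              fix w assume w: "w \<in> outn H z"
              have "0 \<le> prob H z w" using prob_pos[OF assms(1) zr w] by simp
              moreover have "d w \<le> ?m" using le oC w by blast
              ultimately show "prob H z w * d w \<le> prob H z w * ?m" by (rule mult_left_mono[rotated])
            qed
            show "\<exists>w\<in>outn H z. prob H z w * d w < prob H z w * ?m"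
              using y dy prob_pos[OF assms(1) zr y] mult_strict_left_mono by blast
          qed
          also have "\<dots> = ?m" using prob_sum1[OF assms(1) zr] by (simp add: sum_distrib_right[symmetric])
          finally show False using sub dz nm unfolding Pop_def by auto
        qed
      qed
    }
  qed
  show ?thesis using ne cl by blast
qed

lemma pv_ge: assumes "wfg H" "max_strategy H \<sigma>" "min_strategy H \<tau>"
    "\<And>z. z \<in> verts H \<Longrightarrow> u z \<le> Lop H \<sigma> \<tau> u z"
    "\<And>C. C \<noteq> {} \<Longrightarrow> closedS H \<sigma> \<tau> C \<Longrightarrow> C \<inter> Vsink H = {} \<Longrightarrow> \<exists>z\<in>C. u z \<le> 0"
    "x \<in> verts H"
  shows "u x \<le> play_value H \<sigma> \<tau> x"
proof -
  define d where "d = (\<lambda>z. u z - play_value H \<sigma> \<tau> z)"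
  let ?V = "verts H"
  have V: "closedS H \<sigma> \<tau> ?V" by (rule verts_closed[OF assms(1-3)])
  have Vne: "?V \<noteq> {}" using assms(6) by auto
  have fin: "finite ?V" by (rule wfg_fin[OF assms(1)])
  have sub: "d z \<le> Pop H \<sigma> \<tau> d z" if "z \<in> ?V" "z \<notin> Vsink H" for z
  proof -
    have "u z \<le> Pop H \<sigma> \<tau> u z" using assms(4)[OF that(1)] that(2) by (simp add: Lop_def)
    moreover have "play_value H \<sigma> \<tau> z = Pop H \<sigma> \<tau> (play_value H \<sigma> \<tau>) z"
      using pv_fix[OF assms(1), of \<sigma> \<tau> z] that(2) by (simp add: Lop_def)
    ultimately show ?thesis unfolding d_def using Pop_diff[of H \<sigma> \<tau> u "play_value H \<sigma> \<tau>" z]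
      by simp
  qed
  define D where "D = {z\<in>?V. d z = Max (d ` ?V)}"
  from MaxP[OF assms(1) V Vne sub] have D: "D \<noteq> {}" "closedS H \<sigma> \<tau> D" unfolding D_def by auto
  show ?thesis
  proof (rule ccontr)
    assume "\<not> ?thesis"
    then have "0 < d x" unfolding d_def by simp
    also have "d x \<le> Max (d ` ?V)" using fin assms(6) by simp
    finally have mpos: "0 < Max (d ` ?V)" .
    have "D \<inter> Vsink H = {}"
    proof (rule ccontr)
      assume "D \<inter> Vsink H \<noteq> {}"
      then obtain z where z: "z \<in> D" "z \<in> Vsink H" by auto
      have "u z \<le> sval H z" using assms(4)[of z] z D_def by (auto simp: Lop_def)
      moreover have "play_value H \<sigma> \<tau> z = sval H z" using pv_fix[OF assms(1), of \<sigma> \<tau> z] z by (simp add: Lop_def)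
      ultimately have "d z \<le> 0" unfolding d_def by simp
      then show False using z mpos unfolding D_def by auto
    qed
    from assms(5)[OF D(1) D(2) this] obtain z where z: "z \<in> D" "u z \<le> 0" by auto
    have "d z \<le> 0" using z pv_bounds[OF assms(1), of \<sigma> \<tau> z] unfolding d_def by simp
    then show False using z mpos unfolding D_def by auto
  qed
qed

lemma pi_cong: assumes "\<And>x. x \<in> Vmin H \<Longrightarrow> \<tau> x = \<tau>' x"
  shows "play_iter H \<sigma> \<tau> n x = play_iter H \<sigma> \<tau>' n x"
  using assms by (induction n arbitrary: x) auto

lemma pv_cong: assumes "\<And>x. x \<in> Vmin H \<Longrightarrow> \<tau> x = \<tau>' x"
  shows "play_value H \<sigma> \<tau> = play_value H \<sigma> \<tau>'"
  by (intro ext) (simp add: play_value_def pi_cong[OF assms])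

lemma Lop_cong: assumes "\<And>x. x \<in> Vmin H \<Longrightarrow> \<tau> x = \<tau>' x"
  shows "Lop H \<sigma> \<tau> f x = Lop H \<sigma> \<tau>' f x"
  using assms by (auto simp: Lop_def Pop_def)


lemma Lop_cong_pt: assumes "z \<in> Vmin H \<Longrightarrow> \<tau> z = \<tau>' z"
  shows "Lop H \<sigma> \<tau> f z = Lop H \<sigma> \<tau>' f z"
  using assms by (auto simp: Lop_def Pop_def)

lemma Lop_cong_max: assumes "z \<in> Vmax H \<Longrightarrow> \<sigma> z = \<sigma>' z"
  shows "Lop H \<sigma> \<tau> f z = Lop H \<sigma>' \<tau> f z"
  using assms by (auto simp: Lop_def Pop_def)

lemma disj_facts: assumes "wfg H"
  shows "Vmax H \<inter> Vmin H = {}" "Vmax H \<inter> Vrand H = {}" "Vmax H \<inter> Vsink H = {}"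
    "Vmin H \<inter> Vrand H = {}" "Vmin H \<inter> Vsink H = {}" "Vrand H \<inter> Vsink H = {}"
  using assms unfolding wfg_def by auto

lemma outn_ne: "wfg H \<Longrightarrow> x \<in> verts H \<Longrightarrow> x \<notin> Vsink H \<Longrightarrow> outn H x \<noteq> {}"
  unfolding wfg_def by blast

lemma br_exists: assumes H: "wfg H" and \<sigma>: "max_strategy H \<sigma>"
  shows "\<exists>\<tau>. best_response H \<sigma> \<tau>"
proof -
  let ?V = "verts H"
  define T where "T = Pi\<^sub>E (Vmin H) (outn H)"
  have finV: "finite ?V" by (rule wfg_fin[OF H])
  have finT: "finite T" unfolding T_def
    by (rule finite_PiE) (use finV outn_fin[OF H] in \<open>auto simp: verts_def\<close>)
  have TneE: "\<forall>x\<in>Vmin H. outn H x \<noteq> {}"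
    using outn_ne[OF H] disj_facts[OF H] unfolding verts_def by blast
  then have Tne: "T \<noteq> {}" unfolding T_def by (simp add: PiE_eq_empty_iff)
  have Tmin: "min_strategy H \<tau>" if "\<tau> \<in> T" for \<tau>
    using that unfolding T_def min_strategy_def outn_def by auto
  define Sm where "Sm \<tau> = (\<Sum>x\<in>?V. play_value H \<sigma> \<tau> x)" for \<tau>
  obtain \<tau>0 where t0: "\<tau>0 \<in> T" and t0min: "\<And>\<tau>. \<tau> \<in> T \<Longrightarrow> Sm \<tau>0 \<le> Sm \<tau>"
  proof -
    have "Min (Sm ` T) \<in> Sm ` T" using finT Tne by simp
    then obtain \<tau>0 where "\<tau>0 \<in> T" "Sm \<tau>0 = Min (Sm ` T)" by auto
    then show ?thesis using that finT by simp
  qed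
  define w where "w = play_value H \<sigma> \<tau>0"
  have wfix: "w z = Lop H \<sigma> \<tau>0 w z" for z unfolding w_def by (rule pv_fix[OF H])
  have w0: "0 \<le> w z" for z unfolding w_def using pv_bounds[OF H] by blast
  have step1: "w x \<le> w y" if x: "x \<in> Vmin H" and y: "y \<in> outn H x" for x y
  proof (rule ccontr)
    assume "\<not> ?thesis"
    then have lt: "w y < w x" by simp
    define \<tau>1 where "\<tau>1 = \<tau>0(x := y)"
    have t1: "\<tau>1 \<in> T" using t0 x y unfolding T_def \<tau>1_def PiE_def extensional_def by auto
    have xnm: "x \<notin> Vmax H" "x \<notin> Vsink H" using x disj_facts[OF H] by auto
    have le: "play_value H \<sigma> \<tau>1 z \<le> w z" for z
    proof (rule pv_le[OF H w0])
      fix z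
      show "Lop H \<sigma> \<tau>1 w z \<le> w z"
      proof (cases "z = x")
        case True then show ?thesis using lt xnm x by (simp add: Lop_def Pop_def \<tau>1_def)
      next
        case False
        then have "Lop H \<sigma> \<tau>1 w z = Lop H \<sigma> \<tau>0 w z" by (intro Lop_cong_pt) (simp add: \<tau>1_def)
        then show ?thesis using wfix[of z] by simp
      qed
    qed
    have "play_value H \<sigma> \<tau>1 x = play_value H \<sigma> \<tau>1 y"
      using pv_fix[OF H, of \<sigma> \<tau>1 x] xnm x by (simp add: Lop_def Pop_def \<tau>1_def)
    also have "\<dots> < w x" using le[of y] lt by simp
    finally have "Sm \<tau>1 < Sm \<tau>0" unfolding Sm_def
      using le x finV unfolding w_def verts_def
      by (intro sum_strict_mono_ex1) auto
    then show False using t0min[OF t1] by simp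
  qed
  have step2: "w x \<le> play_value H \<sigma> \<tau>' x" if t': "min_strategy H \<tau>'" and x: "x \<in> ?V" for \<tau>' x
  proof (rule pv_ge[OF H \<sigma> t' _ _ x])
    fix z assume z: "z \<in> ?V"
    show "w z \<le> Lop H \<sigma> \<tau>' w z"
    proof (cases "z \<in> Vmin H")
      case True
      then have "z \<notin> Vmax H" "z \<notin> Vsink H" using disj_facts[OF H] by auto
      moreover have "\<tau>' z \<in> outn H z" using t' True unfolding min_strategy_def outn_def by auto
      ultimately show ?thesis using step1[OF True] wfix[of z] True by (auto simp: Lop_def Pop_def)
    next
      case False
      then have "Lop H \<sigma> \<tau>' w z = Lop H \<sigma> \<tau>0 w z" by (intro Lop_cong_pt) simp
      then show ?thesis using wfix[of z] by simp
    qed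
  next
    fix C assume Cne: "C \<noteq> {}" and Ccl: "closedS H \<sigma> \<tau>' C" and Cs: "C \<inter> Vsink H = {}"
    show "\<exists>z\<in>C. w z \<le> 0"
    proof (rule ccontr)
      assume "\<not> ?thesis"
      then have wpos: "\<And>z. z \<in> C \<Longrightarrow> 0 < w z" by force
      define \<tau>2 where "\<tau>2 = restrict (\<lambda>z. if z \<in> C then \<tau>' z else \<tau>0 z) (Vmin H)"
      have t2: "\<tau>2 \<in> T" using t0 t' Ccl unfolding T_def \<tau>2_def PiE_def extensional_def min_strategy_def outn_def
        by auto
      have C2: "closedS H \<sigma> \<tau>2 C" using Ccl unfolding closedS_def \<tau>2_def by auto
      have CV: "C \<subseteq> ?V" using Ccl unfolding closedS_def by auto
      have z0: "play_value H \<sigma> \<tau>2 z = 0" if "z \<in> C" for z by (rule closed_zero[OF H C2 Cs that])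
      define wh where "wh = (\<lambda>z. if z \<in> C then 0 else w z)"
      have whw: "wh z \<le> w z" for z using w0 unfolding wh_def by auto
      have le: "play_value H \<sigma> \<tau>2 z \<le> wh z" for z
      proof (rule pv_le[OF H])
        show "0 \<le> wh z" for z using w0 unfolding wh_def by auto
      next
        fix z
        show "Lop H \<sigma> \<tau>2 wh z \<le> wh z"
        proof (cases "z \<in> C")
          case True
          then have ns: "z \<notin> Vsink H" using Cs by auto
          have cl: "(z \<in> Vmax H \<longrightarrow> \<sigma> z \<in> C) \<and> (z \<in> Vmin H \<longrightarrow> \<tau>2 z \<in> C) \<and>
             (z \<notin> Vmax H \<and> z \<notin> Vmin H \<longrightarrow> outn H z \<subseteq> C)"
            using C2 True ns unfolding closedS_def by blast
          have "(\<Sum>y\<in>outn H z. prob H z y * wh y) = 0" if "z \<notin> Vmax H" "z \<notin> Vmin H"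
            using cl that by (intro sum.neutral) (auto simp: wh_def)
          then show ?thesis using cl ns True by (auto simp: Lop_def Pop_def wh_def)
        next
          case False
          have "Lop H \<sigma> \<tau>2 wh z \<le> Lop H \<sigma> \<tau>2 w z" by (rule Lop_mono[OF H whw])
          also have "\<dots> = Lop H \<sigma> \<tau>0 w z" using False by (intro Lop_cong_pt) (simp add: \<tau>2_def)
          also have "\<dots> = wh z" using wfix[of z] False by (simp add: wh_def)
          finally show ?thesis .
        qed
      qed
      obtain z1 where z1: "z1 \<in> C" using Cne by auto
      have "Sm \<tau>2 < Sm \<tau>0" unfolding Sm_def w_def[symmetric]
      proof (rule sum_strict_mono_ex1[OF finV])
        show "\<forall>x\<in>?V. play_value H \<sigma> \<tau>2 x \<le> w x" using le whw order_trans by blast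
        show "\<exists>x\<in>?V. play_value H \<sigma> \<tau>2 x < w x" using z1 CV z0[OF z1] wpos[OF z1] by (intro bexI[where x=z1]) auto
      qed
      then show False using t0min[OF t2] by simp
    qed
  qed
  have "best_response H \<sigma> \<tau>0" unfolding best_response_def using Tmin[OF t0] step2 w_def by auto
  then show ?thesis by blast
qed


definition brs :: "('v, 'a) ssg_scheme \<Rightarrow> ('v \<Rightarrow> 'v) \<Rightarrow> 'v \<Rightarrow> 'v" where
  "brs H \<sigma> = (SOME \<tau>. best_response H \<sigma> \<tau>)"

lemma brs_br: "wfg H \<Longrightarrow> max_strategy H \<sigma> \<Longrightarrow> best_response H \<sigma> (brs H \<sigma>)"
  unfolding brs_def using br_exists by (rule someI_ex)

lemma vs_eq: "val_sigma H \<sigma> = play_value H \<sigma> (brs H \<sigma>)"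
  unfolding val_sigma_def brs_def by (intro ext) simp

lemma brs_min: "wfg H \<Longrightarrow> max_strategy H \<sigma> \<Longrightarrow> min_strategy H (brs H \<sigma>)"
  using brs_br unfolding best_response_def by blast

lemma vs_le: "wfg H \<Longrightarrow> max_strategy H \<sigma> \<Longrightarrow> min_strategy H \<tau> \<Longrightarrow> x \<in> verts H \<Longrightarrow>
   val_sigma H \<sigma> x \<le> play_value H \<sigma> \<tau> x"
  using brs_br[of H \<sigma>] unfolding best_response_def vs_eq by blast

lemma vs_fix: "wfg H \<Longrightarrow> val_sigma H \<sigma> x = Lop H \<sigma> (brs H \<sigma>) (val_sigma H \<sigma>) x"
  unfolding vs_eq by (rule pv_fix)

lemma vs_bounds: "wfg H \<Longrightarrow> 0 \<le> val_sigma H \<sigma> x \<and> val_sigma H \<sigma> x \<le> 1"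
  unfolding vs_eq by (rule pv_bounds)

lemma vs_min: assumes H: "wfg H" and \<sigma>: "max_strategy H \<sigma>" and x: "x \<in> Vmin H" and y: "y \<in> outn H x"
  shows "val_sigma H \<sigma> x \<le> val_sigma H \<sigma> y"
proof (rule ccontr)
  let ?v = "val_sigma H \<sigma>"
  let ?tb = "brs H \<sigma>"
  assume "\<not> ?thesis"
  then have lt: "?v y < ?v x" by simp
  define \<tau>1 where "\<tau>1 = ?tb(x := y)"
  have t1: "min_strategy H \<tau>1" using brs_min[OF H \<sigma>] y unfolding min_strategy_def \<tau>1_def outn_def by auto
  have xnm: "x \<notin> Vmax H" "x \<notin> Vsink H" using x disj_facts[OF H] by auto
  have le: "play_value H \<sigma> \<tau>1 z \<le> ?v z" for z
  proof (rule pv_le[OF H])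
    show "0 \<le> ?v z" for z using vs_bounds[OF H] by blast
  next
    fix z
    show "Lop H \<sigma> \<tau>1 ?v z \<le> ?v z"
    proof (cases "z = x")
      case True then show ?thesis using lt xnm x by (simp add: Lop_def Pop_def \<tau>1_def)
    next
      case False
      then have "Lop H \<sigma> \<tau>1 ?v z = Lop H \<sigma> ?tb ?v z" by (intro Lop_cong_pt) (simp add: \<tau>1_def)
      then show ?thesis using vs_fix[OF H, of \<sigma> z] by simp
    qed
  qed
  have xV: "x \<in> verts H" using x unfolding verts_def by auto
  have "?v x \<le> play_value H \<sigma> \<tau>1 x" by (rule vs_le[OF H \<sigma> t1 xV])
  also have "\<dots> = play_value H \<sigma> \<tau>1 y"
    using pv_fix[OF H, of \<sigma> \<tau>1 x] xnm x by (simp add: Lop_def Pop_def \<tau>1_def)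
  also have "\<dots> \<le> ?v y" by (rule le)
  finally show False using lt by simp
qed

lemma vs_sub: assumes H: "wfg H" and \<sigma>: "max_strategy H \<sigma>" and t: "min_strategy H \<tau>"
    and z: "z \<in> verts H" and mx: "z \<in> Vmax H \<Longrightarrow> val_sigma H \<sigma> z \<le> val_sigma H \<sigma> (\<sigma>' z)"
  shows "val_sigma H \<sigma> z \<le> Lop H \<sigma>' \<tau> (val_sigma H \<sigma>) z"
proof -
  let ?v = "val_sigma H \<sigma>"
  have fx: "?v z = Lop H \<sigma> (brs H \<sigma>) ?v z" by (rule vs_fix[OF H])
  consider "z \<in> Vsink H" | "z \<in> Vmax H" | "z \<in> Vmin H" | "z \<notin> Vsink H" "z \<notin> Vmax H" "z \<notin> Vmin H" by blast
  then show ?thesis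
  proof cases
    case 1 then show ?thesis using fx by (simp add: Lop_def)
  next
    case 2 then have "z \<notin> Vsink H" using disj_facts[OF H] by auto
    then show ?thesis using 2 mx by (simp add: Lop_def Pop_def)
  next
    case 3 then have "z \<notin> Vsink H" "z \<notin> Vmax H" using disj_facts[OF H] by auto
    moreover have "\<tau> z \<in> outn H z" using t 3 unfolding min_strategy_def outn_def by auto
    ultimately show ?thesis using vs_min[OF H \<sigma> 3] 3 by (simp add: Lop_def Pop_def)
  next
    case 4 then show ?thesis using fx by (simp add: Lop_def Pop_def)
  qed
qed

lemma vs_K: assumes H: "wfg H" and opt: "optimal H \<sigma>" and x: "x \<in> Vmax H" and y: "y \<in> outn H x"
  shows "val_sigma H \<sigma> y \<le> val_sigma H \<sigma> x"
proof (rule ccontr)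
  let ?v = "val_sigma H \<sigma>"
  assume "\<not> ?thesis"
  then have lt: "?v x < ?v y" by simp
  have \<sigma>: "max_strategy H \<sigma>" using opt unfolding optimal_def by blast
  define \<sigma>1 where "\<sigma>1 = \<sigma>(x := y)"
  have s1: "max_strategy H \<sigma>1" using \<sigma> y unfolding max_strategy_def \<sigma>1_def outn_def by auto
  let ?t1 = "brs H \<sigma>1"
  have t1: "min_strategy H ?t1" by (rule brs_min[OF H s1])
  have xV: "x \<in> verts H" using x unfolding verts_def by auto
  have xns: "x \<notin> Vsink H" using x disj_facts[OF H] by auto
  have ge: "?v z \<le> play_value H \<sigma>1 ?t1 z" if "z \<in> verts H" for z
  proof (rule pv_ge[OF H s1 t1 _ _ that])
    fix z assume z: "z \<in> verts H"
    show "?v z \<le> Lop H \<sigma>1 ?t1 ?v z"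
    proof (rule vs_sub[OF H \<sigma> t1 z])
      assume "z \<in> Vmax H"
      show "?v z \<le> ?v (\<sigma>1 z)"
      proof (cases "z = x")
        case True then show ?thesis using lt by (simp add: \<sigma>1_def)
      next
        case False
        then have "?v z = ?v (\<sigma> z)" using vs_fix[OF H, of \<sigma> z] \<open>z \<in> Vmax H\<close> disj_facts[OF H]
          by (auto simp: Lop_def Pop_def)
        then show ?thesis using False by (simp add: \<sigma>1_def)
      qed
    qed
  next
    fix C assume Cne: "C \<noteq> {}" and Ccl: "closedS H \<sigma>1 ?t1 C" and Cs: "C \<inter> Vsink H = {}"
    define D where "D = {z\<in>C. ?v z = Max (?v ` C)}"
    have sub: "?v z \<le> Pop H \<sigma>1 ?t1 ?v z" if "z \<in> C" "z \<notin> Vsink H" for z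
    proof -
      have "z \<in> verts H" using that Ccl unfolding closedS_def by auto
      then have "?v z \<le> Lop H \<sigma>1 ?t1 ?v z"
      proof (rule vs_sub[OF H \<sigma> t1])
        assume "z \<in> Vmax H"
        show "?v z \<le> ?v (\<sigma>1 z)"
        proof (cases "z = x")
          case True then show ?thesis using lt by (simp add: \<sigma>1_def)
        next
          case False
          then have "?v z = ?v (\<sigma> z)" using vs_fix[OF H, of \<sigma> z] \<open>z \<in> Vmax H\<close> disj_facts[OF H]
            by (auto simp: Lop_def Pop_def)
          then show ?thesis using False by (simp add: \<sigma>1_def)
        qed
      qed
      then show ?thesis using that by (simp add: Lop_def)
    qed
    from MaxP[OF H Ccl Cne sub] have D: "D \<noteq> {}" "closedS H \<sigma>1 ?t1 D" unfolding D_def by auto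
    have finC: "finite C" using Ccl wfg_fin[OF H] finite_subset unfolding closedS_def by blast
    have xD: "x \<notin> D"
    proof
      assume xD: "x \<in> D"
      then have "\<sigma>1 x \<in> D" using D(2) x xns unfolding closedS_def by blast
      then have "?v y = Max (?v ` C)" using xD unfolding D_def \<sigma>1_def by auto
      then show False using xD lt unfolding D_def by auto
    qed
    have Dcl: "closedS H \<sigma> ?t1 D" using D(2) xD unfolding closedS_def \<sigma>1_def
      by (metis (no_types, lifting) fun_upd_apply)
    have Ds: "D \<inter> Vsink H = {}" using Cs unfolding D_def by auto
    obtain z where z: "z \<in> D" using D(1) by auto
    have zV: "z \<in> verts H" using z Dcl unfolding closedS_def by auto
    have "?v z \<le> play_value H \<sigma> ?t1 z" by (rule vs_le[OF H \<sigma> t1 zV])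
    also have "\<dots> = 0" by (rule closed_zero[OF H Dcl Ds z])
    finally have "?v z \<le> 0" .
    then show "\<exists>z\<in>C. ?v z \<le> 0" using z unfolding D_def by blast
  qed
  have "?v y \<le> play_value H \<sigma>1 ?t1 y" using ge y outn_sub[OF H] by auto
  also have "\<dots> = play_value H \<sigma>1 ?t1 x"
    using pv_fix[OF H, of \<sigma>1 ?t1 x] x xns by (simp add: Lop_def Pop_def \<sigma>1_def)
  also have "\<dots> = val_sigma H \<sigma>1 x" by (simp add: vs_eq)
  also have "\<dots> \<le> ?v x" using opt s1 xV unfolding optimal_def by blast
  finally show False using lt by simp
qed



definition cutv :: "('v, 'a) ssg_scheme \<Rightarrow> ('v \<times> 'v) set \<Rightarrow> 'v \<Rightarrow> 'v \<Rightarrow> 'v + ('v \<times> 'v)" where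
  "cutv G A x y = (if (x, y) \<in> eff_arcs G A then Inr (x, y) else Inl y)"

definition extv :: "('v, 'a) ssg_scheme \<Rightarrow> ('v \<times> 'v) set \<Rightarrow> ('v \<Rightarrow> real) \<Rightarrow> 'v + ('v \<times> 'v) \<Rightarrow> real" where
  "extv G A f z = (case z of Inl x \<Rightarrow> f x | Inr e \<Rightarrow> if e \<in> eff_arcs G A then f (snd e) else 0)"

definition proj :: "('v + ('v \<times> 'v) \<Rightarrow> 'v + ('v \<times> 'v)) \<Rightarrow> 'v \<Rightarrow> 'v" where
  "proj \<rho> x = (case \<rho> (Inl x) of Inl y \<Rightarrow> y | Inr e \<Rightarrow> snd e)"

lemma extv_cut[simp]: "extv G A f (cutv G A x y) = f y"
  by (simp add: extv_def cutv_def)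

lemma proj_cut[simp]: "\<rho> (Inl x) = cutv G A x y \<Longrightarrow> proj \<rho> x = y"
  by (simp add: proj_def cutv_def)

lemma cutv_inj: "inj_on (cutv G A x) S"
  by (auto simp: inj_on_def cutv_def split: if_splits)

lemma lift_Inl[simp]: "lift_strategy G A \<rho> (Inl x) = cutv G A x (\<rho> x)"
  by (simp add: lift_strategy_def cutv_def)

lemma tr_simps[simp]:
  "Vmax (transform G A \<sigma>) = Inl ` Vmax G"
  "Vmin (transform G A \<sigma>) = Inl ` Vmin G"
  "Vrand (transform G A \<sigma>) = Inl ` Vrand G"
  "Vsink (transform G A \<sigma>) = Inl ` Vsink G \<union> Inr ` eff_arcs G A"
  "sval (transform G A \<sigma>) (Inl s) = sval G s"
  "sval (transform G A \<sigma>) (Inr (a, b)) = val_sigma G \<sigma> b"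
  by (simp_all add: transform_def Let_def)

lemma tr_arcs: "arcs (transform G A \<sigma>) =
   {(Inl x, Inl y) | x y. (x, y) \<in> arcs G - eff_arcs G A}
              \<union> {(Inl x, Inr (x, y)) | x y. (x, y) \<in> eff_arcs G A}
              \<union> {(Inr e, Inr e) | e. e \<in> eff_arcs G A}"
  by (simp add: transform_def Let_def)

lemma tr_prob: "prob (transform G A \<sigma>) (Inl x) (cutv G A x y) = prob G x y"
  by (simp add: transform_def Let_def cutv_def)

lemma eff_sub: "A \<subseteq> arcs G \<Longrightarrow> eff_arcs G A \<subseteq> arcs G"
  unfolding eff_arcs_def by auto

lemma tr_outn_Inl: assumes "A \<subseteq> arcs G"
  shows "outn (transform G A \<sigma>) (Inl x) = cutv G A x ` outn G x"
  using eff_sub[OF assms] unfolding outn_def tr_arcs cutv_def by (auto simp: image_iff)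

lemma tr_outn_Inr: "outn (transform G A \<sigma>) (Inr e) = (if e \<in> eff_arcs G A then {Inr e} else {})"
  unfolding outn_def tr_arcs by (cases e) auto

lemma tr_verts: "verts (transform G A \<sigma>) = Inl ` verts G \<union> Inr ` eff_arcs G A"
  unfolding verts_def by auto


lemma tr_sum: assumes "A \<subseteq> arcs G"
  shows "(\<Sum>w\<in>outn (transform G A \<sigma>) (Inl x). prob (transform G A \<sigma>) (Inl x) w * f w) =
         (\<Sum>y\<in>outn G x. prob G x y * f (cutv G A x y))"
  unfolding tr_outn_Inl[OF assms] by (simp add: sum.reindex[OF cutv_inj] tr_prob)

lemma eff_nosink: "(x, y) \<in> eff_arcs G A \<Longrightarrow> x \<notin> Vsink G"
  unfolding eff_arcs_def by auto

lemma tr_wfg: assumes G: "wfg G" and A: "A \<subseteq> arcs G"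
  shows "wfg (transform G A \<sigma>)"
proof -
  let ?G = "transform G A \<sigma>"
  let ?A = "eff_arcs G A"
  have AV: "arcs G \<subseteq> verts G \<times> verts G" using G unfolding wfg_def by blast
  have effV: "?A \<subseteq> verts G \<times> verts G" using eff_sub[OF A] AV by blast
  have finA: "finite ?A" using effV wfg_fin[OF G] by (meson finite_SigmaI finite_subset)
  have "finite (verts ?G)" unfolding tr_verts using wfg_fin[OF G] finA by simp
  moreover have "Vmax ?G \<inter> Vmin ?G = {} \<and> Vmax ?G \<inter> Vrand ?G = {} \<and> Vmax ?G \<inter> Vsink ?G = {} \<and>
     Vmin ?G \<inter> Vrand ?G = {} \<and> Vmin ?G \<inter> Vsink ?G = {} \<and> Vrand ?G \<inter> Vsink ?G = {}"
    using disj_facts[OF G] by auto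
  moreover have "Vsink ?G \<noteq> {}" using G unfolding wfg_def by auto
  moreover have "arcs ?G \<subseteq> verts ?G \<times> verts ?G"
    unfolding tr_arcs tr_verts using AV effV by blast
  moreover have "\<forall>x \<in> verts ?G - Vsink ?G. outn ?G x \<noteq> {}"
  proof
    fix z assume z: "z \<in> verts ?G - Vsink ?G"
    then obtain x where x: "z = Inl x" "x \<in> verts G" "x \<notin> Vsink G" unfolding tr_verts by auto
    then show "outn ?G z \<noteq> {}" using outn_ne[OF G] tr_outn_Inl[OF A] by auto
  qed
  moreover have "\<forall>s \<in> Vsink ?G. outn ?G s = {s}"
  proof
    fix z assume "z \<in> Vsink ?G"
    then consider s where "z = Inl s" "s \<in> Vsink G" | e where "z = Inr e" "e \<in> ?A" by auto
    then show "outn ?G z = {z}"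
    proof cases
      case 1
      have "outn G s = {s}" using G 1 unfolding wfg_def by blast
      moreover have "(s, s) \<notin> ?A" using eff_nosink[of s s G A] 1(2) by auto
      ultimately show ?thesis using 1 tr_outn_Inl[OF A] by (simp add: cutv_def)
    next
      case 2 then show ?thesis by (simp add: tr_outn_Inr)
    qed
  qed
  moreover have "\<forall>x \<in> Vrand ?G. (\<forall>y \<in> outn ?G x. prob ?G x y > 0) \<and> (\<Sum>y \<in> outn ?G x. prob ?G x y) = 1"
  proof
    fix z assume "z \<in> Vrand ?G"
    then obtain x where x: "z = Inl x" "x \<in> Vrand G" by auto
    have "\<forall>y \<in> outn ?G z. prob ?G z y > 0"
      using x tr_outn_Inl[OF A] prob_pos[OF G x(2)] by (auto simp: tr_prob)
    moreover have "(\<Sum>y \<in> outn ?G z. prob ?G z y) = 1"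
      using tr_sum[OF A, of \<sigma> x "\<lambda>_. 1"] prob_sum1[OF G x(2)] x by simp
    ultimately show "(\<forall>y \<in> outn ?G z. prob ?G z y > 0) \<and> (\<Sum>y \<in> outn ?G z. prob ?G z y) = 1" by blast
  qed
  moreover have "\<forall>s \<in> Vsink ?G. 0 \<le> sval ?G s \<and> sval ?G s \<le> 1"
  proof
    fix z assume "z \<in> Vsink ?G"
    then consider s where "z = Inl s" "s \<in> Vsink G" | a b where "z = Inr (a, b)" by auto
    then show "0 \<le> sval ?G z \<and> sval ?G z \<le> 1"
      by cases (use sval_bounds[OF G] vs_bounds[OF G] in auto)
  qed
  ultimately show ?thesis unfolding wfg_def by blast
qed


lemma arcs_cut: assumes "A \<subseteq> arcs G" "(x, y) \<in> arcs G"
  shows "(Inl x, cutv G A x y) \<in> arcs (transform G A \<sigma>)"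
proof -
  have "y \<in> outn G x" using assms(2) unfolding outn_def by simp
  then have "cutv G A x y \<in> outn (transform G A \<sigma>) (Inl x)" unfolding tr_outn_Inl[OF assms(1)] by (rule imageI)
  then show ?thesis unfolding outn_def by simp
qed

lemma Inr_notin_Inl[simp]: "Inr e \<notin> Inl ` X"
  by auto

lemma Inr_in_Inr[simp]: "Inr e \<in> Inr ` X \<longleftrightarrow> e \<in> X"
  by auto

lemma Inl_in_Inl[simp]: "Inl e \<in> Inl ` X \<longleftrightarrow> e \<in> X"
  by auto

lemma lift_max: assumes "A \<subseteq> arcs G" "max_strategy G \<rho>" shows "max_strategy (transform G A \<sigma>) (lift_strategy G A \<rho>)"
proof (unfold max_strategy_def, intro ballI)
  fix z assume "z \<in> Vmax (transform G A \<sigma>)"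
  then obtain x where x: "z = Inl x" "x \<in> Vmax G" by auto
  then have "(x, \<rho> x) \<in> arcs G" using assms(2) unfolding max_strategy_def by blast
  then show "(z, lift_strategy G A \<rho> z) \<in> arcs (transform G A \<sigma>)"
    using x arcs_cut[OF assms(1)] by simp
qed

lemma lift_min: assumes "A \<subseteq> arcs G" "min_strategy G \<rho>" shows "min_strategy (transform G A \<sigma>) (lift_strategy G A \<rho>)"
proof (unfold min_strategy_def, intro ballI)
  fix z assume "z \<in> Vmin (transform G A \<sigma>)"
  then obtain x where x: "z = Inl x" "x \<in> Vmin G" by auto
  then have "(x, \<rho> x) \<in> arcs G" using assms(2) unfolding min_strategy_def by blast
  then show "(z, lift_strategy G A \<rho> z) \<in> arcs (transform G A \<sigma>)"
    using x arcs_cut[OF assms(1)] by simp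
qed

lemma arc_cut_ex: assumes "A \<subseteq> arcs G" "(Inl x, z) \<in> arcs (transform G A \<sigma>)"
  shows "\<exists>y. (x, y) \<in> arcs G \<and> z = cutv G A x y"
  using tr_outn_Inl[OF assms(1), of \<sigma> x] assms(2) unfolding outn_def by auto

lemma proj_max: assumes "A \<subseteq> arcs G" "max_strategy (transform G A \<sigma>) \<rho>" "x \<in> Vmax G"
  shows "\<rho> (Inl x) = cutv G A x (proj \<rho> x) \<and> (x, proj \<rho> x) \<in> arcs G"
proof -
  have "(Inl x, \<rho> (Inl x)) \<in> arcs (transform G A \<sigma>)" using assms(2,3) unfolding max_strategy_def by auto
  then obtain y where "(x, y) \<in> arcs G" "\<rho> (Inl x) = cutv G A x y" using arc_cut_ex[OF assms(1)] by blast
  then show ?thesis by simp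
qed

lemma proj_min: assumes "A \<subseteq> arcs G" "min_strategy (transform G A \<sigma>) \<rho>" "x \<in> Vmin G"
  shows "\<rho> (Inl x) = cutv G A x (proj \<rho> x) \<and> (x, proj \<rho> x) \<in> arcs G"
proof -
  have "(Inl x, \<rho> (Inl x)) \<in> arcs (transform G A \<sigma>)" using assms(2,3) unfolding min_strategy_def by auto
  then obtain y where "(x, y) \<in> arcs G" "\<rho> (Inl x) = cutv G A x y" using arc_cut_ex[OF assms(1)] by blast
  then show ?thesis by simp
qed

lemma proj_max_strat: assumes "A \<subseteq> arcs G" "max_strategy (transform G A \<sigma>) \<rho>" shows "max_strategy G (proj \<rho>)"
proof (unfold max_strategy_def[of G], intro ballI)
  fix x assume "x \<in> Vmax G"
  then show "(x, proj \<rho> x) \<in> arcs G" using proj_max[OF assms] by blast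
qed

lemma proj_min_strat: assumes "A \<subseteq> arcs G" "min_strategy (transform G A \<sigma>) \<rho>" shows "min_strategy G (proj \<rho>)"
proof (unfold min_strategy_def[of G], intro ballI)
  fix x assume "x \<in> Vmin G"
  then show "(x, proj \<rho> x) \<in> arcs G" using proj_min[OF assms] by blast
qed

lemma LopT: assumes A: "A \<subseteq> arcs G"
    and m1: "x \<in> Vmax G \<Longrightarrow> \<rho> (Inl x) = cutv G A x (\<sigma>1 x)"
    and m2: "x \<in> Vmin G \<Longrightarrow> \<tau>h (Inl x) = cutv G A x (\<tau>1 x)"
  shows "Lop (transform G A \<sigma>) \<rho> \<tau>h (extv G A f) (Inl x) = Lop G \<sigma>1 \<tau>1 f x"
proof -
  have s: "Inl x \<in> Vsink (transform G A \<sigma>) \<longleftrightarrow> x \<in> Vsink G"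
    "Inl x \<in> Vmax (transform G A \<sigma>) \<longleftrightarrow> x \<in> Vmax G"
    "Inl x \<in> Vmin (transform G A \<sigma>) \<longleftrightarrow> x \<in> Vmin G" by auto
  show ?thesis unfolding Lop_def Pop_def s tr_sum[OF A] extv_cut tr_simps(5)
    using m1 m2 by simp
qed

lemma LopT_Inr: "Lop (transform G A \<sigma>) \<rho> \<tau>h g (Inr e) =
    (if e \<in> eff_arcs G A then val_sigma G \<sigma> (snd e) else 0)"
proof -
  obtain a b where e: "e = (a, b)" by (cases e)
  have s: "Inr e \<in> Vsink (transform G A \<sigma>) \<longleftrightarrow> e \<in> eff_arcs G A"
    "Inr e \<notin> Vmax (transform G A \<sigma>)"
    "Inr e \<notin> Vmin (transform G A \<sigma>)" by auto
  show ?thesis using e by (simp add: Lop_def Pop_def tr_outn_Inr)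
qed

lemma extv_Inr: "extv G A (val_sigma G \<sigma>) (Inr e) = (if e \<in> eff_arcs G A then val_sigma G \<sigma> (snd e) else 0)"
  by (simp add: extv_def)

lemma extv_nonneg: "wfg G \<Longrightarrow> 0 \<le> extv G A (val_sigma G \<sigma>) z"
  using vs_bounds[of G \<sigma>] by (cases z) (auto simp: extv_def)


lemma vs_max_eq: "wfg H \<Longrightarrow> z \<in> Vmax H \<Longrightarrow> val_sigma H \<sigma> z = val_sigma H \<sigma> (\<sigma> z)"
  using vs_fix[of H \<sigma> z] disj_facts[of H] by (auto simp: Lop_def Pop_def)

lemma Lop_nonmax: "wfg H \<Longrightarrow> z \<notin> Vmax H \<Longrightarrow> Lop H \<sigma>' (brs H \<sigma>) (val_sigma H \<sigma>) z = val_sigma H \<sigma> z"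
  using vs_fix[of H \<sigma> z] Lop_cong_max[of z H \<sigma>' \<sigma>] by simp

lemma claim_a: assumes G: "wfg G" and A: "A \<subseteq> arcs G" and \<sigma>: "max_strategy G \<sigma>"
    and z: "z \<in> verts (transform G A \<sigma>)"
  shows "val_sigma (transform G A \<sigma>) (lift_strategy G A \<sigma>) z = extv G A (val_sigma G \<sigma>) z"
proof -
  let ?G = "transform G A \<sigma>"
  let ?sh = "lift_strategy G A \<sigma>"
  let ?v = "val_sigma G \<sigma>"
  let ?vt = "extv G A ?v"
  let ?tb = "brs G \<sigma>"
  let ?th = "lift_strategy G A ?tb"
  have G': "wfg ?G" by (rule tr_wfg[OF G A])
  have sh: "max_strategy ?G ?sh" by (rule lift_max[OF A \<sigma>])
  have tb: "min_strategy G ?tb" by (rule brs_min[OF G \<sigma>])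
  have th: "min_strategy ?G ?th" by (rule lift_min[OF A tb])
  have Lvt: "Lop ?G ?sh ?th ?vt w = ?vt w" for w
  proof (cases w)
    case (Inl x)
    have "Lop ?G ?sh ?th ?vt w = Lop G \<sigma> ?tb ?v x" unfolding Inl by (rule LopT[OF A]) simp_all
    also have "\<dots> = ?v x" using vs_fix[OF G, of \<sigma> x] by simp
    finally show ?thesis using Inl by (simp add: extv_def)
  next
    case (Inr e) then show ?thesis by (simp add: LopT_Inr extv_Inr)
  qed
  have up: "val_sigma ?G ?sh z \<le> ?vt z"
  proof -
    have "val_sigma ?G ?sh z \<le> play_value ?G ?sh ?th z" by (rule vs_le[OF G' sh th z])
    also have "\<dots> \<le> ?vt z" by (rule pv_le[OF G' extv_nonneg[OF G]]) (simp add: Lvt)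
    finally show ?thesis .
  qed
  let ?t' = "brs ?G ?sh"
  have t': "min_strategy ?G ?t'" by (rule brs_min[OF G' sh])
  have sinkInr: "Inr e \<in> Vsink ?G" if "Inr e \<in> verts ?G" for e using that unfolding tr_verts by auto
  have lo: "?vt z \<le> play_value ?G ?sh ?t' z"
  proof (rule pv_ge[OF G' sh t' _ _ z])
    fix w assume w: "w \<in> verts ?G"
    show "?vt w \<le> Lop ?G ?sh ?t' ?vt w"
    proof (cases w)
      case (Inl x)
      have xV: "x \<in> verts G" using w Inl unfolding tr_verts by auto
      have pm: "min_strategy G (proj ?t')" by (rule proj_min_strat[OF A t'])
      have "Lop ?G ?sh ?t' ?vt w = Lop G \<sigma> (proj ?t') ?v x" unfolding Inl
      proof (rule LopT[OF A])
        show "?t' (Inl x) = cutv G A x (proj ?t' x)" if "x \<in> Vmin G" using proj_min[OF A t' that] by blast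
      qed simp
      moreover have "?v x \<le> Lop G \<sigma> (proj ?t') ?v x"
        by (rule vs_sub[OF G \<sigma> pm xV]) (simp add: vs_max_eq[OF G])
      ultimately show ?thesis using Inl by (simp add: extv_def)
    next
      case (Inr e) then show ?thesis by (simp add: LopT_Inr extv_Inr)
    qed
  next
    fix C' assume C'ne: "C' \<noteq> {}" and C'cl: "closedS ?G ?sh ?t' C'" and C's: "C' \<inter> Vsink ?G = {}"
    define C where "C = {x. Inl x \<in> C'}"
    define \<tau>1 where "\<tau>1 = proj ?t'"
    have C'V: "C' \<subseteq> verts ?G" using C'cl unfolding closedS_def by auto
    have elem: "\<exists>x. w = Inl x" if "w \<in> C'" for w
    proof (cases w)
      case (Inr e) then have "w \<in> Vsink ?G" using sinkInr[of e] C'V that by blast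
      then show ?thesis using C's that by auto
    qed auto
    have cut_in: "y \<in> C" if "cutv G A x y \<in> C'" for x y
    proof (cases "(x, y) \<in> eff_arcs G A")
      case True
      then have "cutv G A x y \<in> Vsink ?G" by (simp add: cutv_def)
      then show ?thesis using that C's by auto
    next
      case False then show ?thesis using that by (simp add: cutv_def C_def)
    qed
    have Ccl: "closedS G \<sigma> \<tau>1 C" unfolding closedS_def
    proof (intro conjI ballI impI)
      show "C \<subseteq> verts G" using C'V unfolding C_def tr_verts by auto
    next
      fix x assume x: "x \<in> C" "x \<notin> Vsink G"
      have ix: "Inl x \<in> C'" "Inl x \<notin> Vsink ?G" using x unfolding C_def by auto
      have cl: "(Inl x \<in> Vmax ?G \<longrightarrow> ?sh (Inl x) \<in> C') \<and> (Inl x \<in> Vmin ?G \<longrightarrow> ?t' (Inl x) \<in> C') \<and>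
         (Inl x \<notin> Vmax ?G \<and> Inl x \<notin> Vmin ?G \<longrightarrow> outn ?G (Inl x) \<subseteq> C')"
        using C'cl ix unfolding closedS_def by blast
      show "\<sigma> x \<in> C" if "x \<in> Vmax G"
      proof -
        have "cutv G A x (\<sigma> x) \<in> C'" using cl that by simp
        then show ?thesis by (rule cut_in)
      qed
      show "\<tau>1 x \<in> C" if "x \<in> Vmin G"
      proof -
        have "?t' (Inl x) \<in> C'" using cl that by simp
        then have "cutv G A x (\<tau>1 x) \<in> C'" using proj_min[OF A t' that] unfolding \<tau>1_def by metis
        then show ?thesis by (rule cut_in)
      qed
      show "outn G x \<subseteq> C" if "x \<notin> Vmax G \<and> x \<notin> Vmin G"
      proof
        fix y assume "y \<in> outn G x"
        then have "cutv G A x y \<in> C'" using cl that unfolding tr_outn_Inl[OF A] by auto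
        then show "y \<in> C" by (rule cut_in)
      qed
    qed
    have Cs: "C \<inter> Vsink G = {}" using C's unfolding C_def by auto
    obtain w where w: "w \<in> C'" using C'ne by auto
    then obtain x where x: "w = Inl x" using elem by blast
    have xC: "x \<in> C" using w x unfolding C_def by simp
    have xV: "x \<in> verts G" using Ccl xC unfolding closedS_def by auto
    have t1: "min_strategy G \<tau>1" unfolding \<tau>1_def by (rule proj_min_strat[OF A t'])
    have "?v x \<le> play_value G \<sigma> \<tau>1 x" by (rule vs_le[OF G \<sigma> t1 xV])
    also have "\<dots> = 0" by (rule closed_zero[OF G Ccl Cs xC])
    finally show "\<exists>w\<in>C'. ?vt w \<le> 0" using w x by (intro bexI[of _ w]) (auto simp: extv_def)
  qed
  have "val_sigma ?G ?sh z = play_value ?G ?sh ?t' z" by (simp add: vs_eq)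
  then show ?thesis using up lo by simp
qed

theorem lemma14:
  fixes G :: "'v ssg" and A :: "('v \<times> 'v) set" and \<sigma> :: "'v \<Rightarrow> 'v"
  assumes "is_ssg G"
    and "A \<subseteq> arcs G"
    and "max_strategy G \<sigma>"
  shows "optimal G \<sigma> \<longleftrightarrow> optimal (transform G A \<sigma>) (lift_strategy G A \<sigma>)"
proof -
  have G: "wfg G" by (rule is_ssg_wfg[OF assms(1)])
  note A = assms(2) and \<sigma> = assms(3)
  let ?G = "transform G A \<sigma>"
  let ?sh = "lift_strategy G A \<sigma>"
  let ?v = "val_sigma G \<sigma>"
  let ?vt = "extv G A ?v"
  let ?tb = "brs G \<sigma>"
  let ?th = "lift_strategy G A ?tb"
  have G': "wfg ?G" by (rule tr_wfg[OF G A])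
  have sh: "max_strategy ?G ?sh" by (rule lift_max[OF A \<sigma>])
  have tb: "min_strategy G ?tb" by (rule brs_min[OF G \<sigma>])
  have th: "min_strategy ?G ?th" by (rule lift_min[OF A tb])
  have a: "val_sigma ?G ?sh z = ?vt z" if "z \<in> verts ?G" for z by (rule claim_a[OF G A \<sigma> that])
  show ?thesis
  proof
    assume opt: "optimal G \<sigma>"
    show "optimal ?G ?sh" unfolding optimal_def
    proof (intro conjI sh allI impI ballI)
      fix \<rho> z assume \<rho>: "max_strategy ?G \<rho>" and z: "z \<in> verts ?G"
      have "val_sigma ?G \<rho> z \<le> play_value ?G \<rho> ?th z" by (rule vs_le[OF G' \<rho> th z])
      also have "\<dots> \<le> ?vt z"
      proof (rule pv_le[OF G' extv_nonneg[OF G]])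
        fix w
        show "Lop ?G \<rho> ?th ?vt w \<le> ?vt w"
        proof (cases w)
          case (Inl x)
          have "Lop ?G \<rho> ?th ?vt w = Lop G (proj \<rho>) ?tb ?v x" unfolding Inl
          proof (rule LopT[OF A])
            show "\<rho> (Inl x) = cutv G A x (proj \<rho> x)" if "x \<in> Vmax G" using proj_max[OF A \<rho> that] by blast
          qed simp
          also have "\<dots> \<le> ?v x"
          proof (cases "x \<in> Vmax G")
            case True
            then have "x \<notin> Vsink G" using disj_facts[OF G] by auto
            then have "Lop G (proj \<rho>) ?tb ?v x = ?v (proj \<rho> x)" using True by (simp add: Lop_def Pop_def)
            also have "\<dots> \<le> ?v x"
            proof -
              have "proj \<rho> x \<in> outn G x" using proj_max[OF A \<rho> True] unfolding outn_def by blast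
              then show ?thesis by (rule vs_K[OF G opt True])
            qed
            finally show ?thesis .
          next
            case False then show ?thesis using Lop_nonmax[OF G] by simp
          qed
          finally show ?thesis using Inl by (simp add: extv_def)
        next
          case (Inr e) then show ?thesis by (simp add: LopT_Inr extv_Inr)
        qed
      qed
      also have "\<dots> = val_sigma ?G ?sh z" using a[OF z] by simp
      finally show "val_sigma ?G \<rho> z \<le> val_sigma ?G ?sh z" .
    qed
  next
    assume opt': "optimal ?G ?sh"
    have K: "?v y \<le> ?v x" if x: "x \<in> Vmax G" and y: "y \<in> outn G x" for x y
    proof -
      have xV: "x \<in> verts G" using x unfolding verts_def by auto
      have ix: "Inl x \<in> Vmax ?G" using x by simp
      have cy: "cutv G A x y \<in> outn ?G (Inl x)" unfolding tr_outn_Inl[OF A] using y by (rule imageI)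
      have "val_sigma ?G ?sh (cutv G A x y) \<le> val_sigma ?G ?sh (Inl x)" by (rule vs_K[OF G' opt' ix cy])
      moreover have "cutv G A x y \<in> verts ?G" using cy outn_sub[OF G'] by blast
      moreover have "Inl x \<in> verts ?G" using xV unfolding tr_verts by simp
      moreover have "extv G A ?v (Inl x) = ?v x" by (simp add: extv_def)
      ultimately show ?thesis using a[of "cutv G A x y"] a[of "Inl x"] by (simp only: extv_cut)
    qed
    show "optimal G \<sigma>" unfolding optimal_def
    proof (intro conjI \<sigma> allI impI ballI)
      fix \<sigma>2 x assume s2: "max_strategy G \<sigma>2" and x: "x \<in> verts G"
      have "val_sigma G \<sigma>2 x \<le> play_value G \<sigma>2 ?tb x" by (rule vs_le[OF G s2 tb x])
      also have "\<dots> \<le> ?v x"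
      proof (rule pv_le[OF G])
        show "0 \<le> ?v w" for w using vs_bounds[OF G] by blast
      next
        fix w
        show "Lop G \<sigma>2 ?tb ?v w \<le> ?v w"
        proof (cases "w \<in> Vmax G")
          case True
          then have "w \<notin> Vsink G" using disj_facts[OF G] by auto
          then have "Lop G \<sigma>2 ?tb ?v w = ?v (\<sigma>2 w)" using True by (simp add: Lop_def Pop_def)
          also have "\<dots> \<le> ?v w" using K[OF True] s2 True unfolding max_strategy_def outn_def by simp
          finally show ?thesis .
        next
          case False then show ?thesis using Lop_nonmax[OF G] by simp
        qed
      qed
      finally show "val_sigma G \<sigma>2 x \<le> ?v x" .
    qed
  qed
qed

end
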